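(* For each integer $n\geq 3$, the Johnson graph $J(n,2)$ satisfies $\operatorname{tww}(J(n,2))\leq 2(n-3)$.
   Context: All graphs are finite and simple. The Johnson graph $J(n,2)$ has vertex set the 2-element subsets of $\{1,\dots,n\}$, two vertices $S,S'$ being adjacent iff $|S\cap S'|=1$. A trigraph is a graph whose edges are each colored red or black; a graph is viewed as a trigraph with all edges black; the red degree of a vertex is the number of red edges incident to it. For a partition $\mathcal{P}$ of $V(G)$, the quotient trigraph $G/\mathcal{P}$ has vertex set $\mathcal{P}$; two distinct parts $U,W$ are joined by a black edge if every pair $\{u,w\}$ with $u\in U,w\in W$ is a black edge of $G$, are non-adjacent if no such pair is an edge, and are joined by a red edge otherwise. A contraction sequence of an $N$-vertex trigraph $G$ is a sequence $\mathcal{P}_N,\dots,\mathcal{P}_1$ of partitions of $V(G)$ where $\mathcal{P}_N$ is the partition into singletons and each $\mathcal{P}_i$ arises from $\mathcal{P}_{i+1}$ by merging two parts; its width is the maximum red degree over all $G/\mathcal{P}_i$, and the twin-width $\operatorname{tww}(G)$ is the minimum width of a contraction sequence. *)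

theory Defs
  imports Main
begin

text \<open>A graph is given by a finite vertex set V and a symmetric irreflexive
adjacency relation E (all edges black). A partition of V is a set of parts.\<close>

definition red_edge :: "('a \<Rightarrow> 'a \<Rightarrow> bool) \<Rightarrow> 'a set \<Rightarrow> 'a set \<Rightarrow> bool" where
  "red_edge E U W \<longleftrightarrow>
     \<not> (\<forall>u\<in>U. \<forall>w\<in>W. E u w) \<and> \<not> (\<forall>u\<in>U. \<forall>w\<in>W. \<not> E u w)"

definition red_degree :: "('a \<Rightarrow> 'a \<Rightarrow> bool) \<Rightarrow> 'a set set \<Rightarrow> 'a set \<Rightarrow> nat" where
  "red_degree E P U = card {W \<in> P. W \<noteq> U \<and> red_edge E U W}"

definition singleton_partition :: "'a set \<Rightarrow> 'a set set" where
  "singleton_partition V = (\<lambda>v. {v}) ` V"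

definition merge_step :: "'a set set \<Rightarrow> 'a set set \<Rightarrow> bool" where
  "merge_step P Q \<longleftrightarrow>
     (\<exists>A\<in>P. \<exists>B\<in>P. A \<noteq> B \<and> Q = insert (A \<union> B) (P - {A, B}))"

text \<open>A contraction sequence P_N, ..., P_1 with N = card V, indexed by i.\<close>
definition contraction_sequence :: "'a set \<Rightarrow> (nat \<Rightarrow> 'a set set) \<Rightarrow> bool" where
  "contraction_sequence V P \<longleftrightarrow>
     P (card V) = singleton_partition V \<and>
     (\<forall>i. 1 \<le> i \<and> i < card V \<longrightarrow> merge_step (P (Suc i)) (P i))"

definition seq_width_le ::
  "('a \<Rightarrow> 'a \<Rightarrow> bool) \<Rightarrow> 'a set \<Rightarrow> (nat \<Rightarrow> 'a set set) \<Rightarrow> nat \<Rightarrow> bool" where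
  "seq_width_le E V P d \<longleftrightarrow>
     (\<forall>i\<in>{1..card V}. \<forall>U\<in>P i. red_degree E (P i) U \<le> d)"

definition twin_width :: "'a set \<Rightarrow> ('a \<Rightarrow> 'a \<Rightarrow> bool) \<Rightarrow> nat" where
  "twin_width V E = (LEAST d. \<exists>P. contraction_sequence V P \<and> seq_width_le E V P d)"

definition johnson2_vertices :: "nat \<Rightarrow> nat set set" where
  "johnson2_vertices n = {S. S \<subseteq> {1..n} \<and> card S = 2}"

definition johnson2_adj :: "nat set \<Rightarrow> nat set \<Rightarrow> bool" where
  "johnson2_adj S S' \<longleftrightarrow> card (S \<inter> S') = 1"

end

theory Submission
  imports Defs
begin


definition is_part :: "'a set set \<Rightarrow> bool" where
  "is_part P \<longleftrightarrow> finite P \<and> (\<forall>A\<in>P. A \<noteq> {}) \<and> (\<forall>A\<in>P. \<forall>B\<in>P. A \<noteq> B \<longrightarrow> A \<inter> B = {})"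

definition okp :: "('a \<Rightarrow> 'a \<Rightarrow> bool) \<Rightarrow> nat \<Rightarrow> 'a set set \<Rightarrow> bool" where
  "okp E d P \<longleftrightarrow> is_part P \<and> (\<forall>U\<in>P. red_degree E P U \<le> d)"

definition stp :: "('a \<Rightarrow> 'a \<Rightarrow> bool) \<Rightarrow> nat \<Rightarrow> 'a set set \<Rightarrow> 'a set set \<Rightarrow> bool" where
  "stp E d P Q \<longleftrightarrow> merge_step P Q \<and> okp E d Q"

lemma merge_card:
  assumes "is_part P" "merge_step P Q"
  shows "card Q = card P - 1 \<and> card P \<ge> 2 \<and> is_part Q"
proof -
  obtain A B where AB: "A \<in> P" "B \<in> P" "A \<noteq> B" "Q = insert (A \<union> B) (P - {A, B})"
    using assms(2) unfolding merge_step_def by blast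
  have fin: "finite P" using assms(1) unfolding is_part_def by blast
  have ne: "A \<noteq> {}" "B \<noteq> {}" using assms(1) AB unfolding is_part_def by auto
  have dis: "\<And>C D. C \<in> P \<Longrightarrow> D \<in> P \<Longrightarrow> C \<noteq> D \<Longrightarrow> C \<inter> D = {}"
    using assms(1) unfolding is_part_def by blast
  have notin: "A \<union> B \<notin> P - {A, B}"
  proof
    assume "A \<union> B \<in> P - {A, B}"
    then have "A \<union> B \<in> P" "A \<union> B \<noteq> A" by auto
    then have "(A \<union> B) \<inter> A = {}" using dis AB(1) by blast
    then show False using ne by auto
  qed
  have c2: "card P \<ge> 2"
  proof -
    have "{A, B} \<subseteq> P" using AB by auto
    then have "card {A, B} \<le> card P" using fin card_mono by blast
    then show ?thesis using AB(3) by auto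
  qed
  have "card (P - {A, B}) = card P - 2"
    using AB fin by (subst card_Diff_subset) auto
  then have "card Q = card P - 1" using AB(4) notin fin c2 by auto
  moreover have "is_part Q"
    unfolding is_part_def
  proof (intro conjI ballI impI)
    show "finite Q" using AB(4) fin by auto
  next
    fix C assume "C \<in> Q" then show "C \<noteq> {}" using AB ne assms(1) unfolding is_part_def by auto
  next
    fix C D assume "C \<in> Q" "D \<in> Q" "C \<noteq> D"
    then show "C \<inter> D = {}" using AB dis by (auto; blast)
  qed
  ultimately show ?thesis using c2 by blast
qed

lemma chain_aux:
  assumes fV: "finite V" and ok0: "okp E d (singleton_partition V)"
    and r: "(stp E d)\<^sup>*\<^sup>* (singleton_partition V) Q"
  shows "\<exists>F. F (card V) = singleton_partition V \<and> F (card Q) = Q \<and> okp E d Q \<and> card Q \<le> card V \<and>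
     (\<forall>i. card Q \<le> i \<and> i < card V \<longrightarrow> merge_step (F (Suc i)) (F i)) \<and>
     (\<forall>i. card Q \<le> i \<and> i \<le> card V \<longrightarrow> okp E d (F i))"
  using r
proof (induction rule: rtranclp_induct)
  case base
  have "card (singleton_partition V) = card V"
    unfolding singleton_partition_def by (rule card_image) (auto simp: inj_on_def)
  then show ?case using ok0 by (intro exI[of _ "\<lambda>_. singleton_partition V"]) auto
next
  case (step Q Q')
  then obtain F where F: "F (card V) = singleton_partition V" "F (card Q) = Q" "okp E d Q" "card Q \<le> card V"
     "\<forall>i. card Q \<le> i \<and> i < card V \<longrightarrow> merge_step (F (Suc i)) (F i)"
     "\<forall>i. card Q \<le> i \<and> i \<le> card V \<longrightarrow> okp E d (F i)" by blast
  have ms: "merge_step Q Q'" "okp E d Q'" using step(2) unfolding stp_def by auto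
  have ip: "is_part Q" using F(3) unfolding okp_def by auto
  from merge_card[OF ip ms(1)] have cQ: "card Q' = card Q - 1" "card Q \<ge> 2" by auto
  have le: "card Q \<le> card V" by (rule F(4))
  define G where "G = F(card Q' := Q')"
  show ?case
  proof (intro exI[of _ G] conjI allI impI)
    show "G (card V) = singleton_partition V" unfolding G_def using F(1) cQ le by auto
    show "G (card Q') = Q'" unfolding G_def by simp
    show "okp E d Q'" by (rule ms(2))
    show "card Q' \<le> card V" using cQ le by simp
  next
    fix i assume i: "card Q' \<le> i \<and> i < card V"
    show "merge_step (G (Suc i)) (G i)"
    proof (cases "i = card Q'")
      case True
      then have "Suc i = card Q" using cQ by auto
      then show ?thesis unfolding G_def using True F(2) ms(1) by auto
    next
      case False
      then show ?thesis unfolding G_def using i F(5) cQ by auto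
    qed
  next
    fix i assume i: "card Q' \<le> i \<and> i \<le> card V"
    show "okp E d (G i)"
      unfolding G_def using i F(6) cQ ms(2) by auto
  qed
qed


datatype lbl = LQ | LP nat | LS nat nat

definition lab :: "nat \<Rightarrow> nat \<Rightarrow> nat \<Rightarrow> nat \<Rightarrow> lbl" where
 "lab k m a b = (if b \<le> k \<or> b = 2 then LQ else if a \<le> k \<or> (a = Suc k \<and> b \<le> m) then LP b else LS a b)"

fun AL :: "nat \<Rightarrow> nat \<Rightarrow> nat \<Rightarrow> lbl \<Rightarrow> lbl set" where
 "AL k m n LQ = LP ` {4..n}"
| "AL k m n (LP x) = (if 2 \<le> k \<and> 4 \<le> x then {LQ} else {}) \<union> LP ` ({max (k+1) 3..n} - {x}) \<union>
      (if k+2 \<le> x \<and> x \<le> m then LS (k+1) ` {m+1..n} else {})"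
| "AL k m n (LS a b) = (if m < n then LP ` {k+2..m} else {})"

definition adj :: "nat \<Rightarrow> nat \<Rightarrow> nat \<Rightarrow> nat \<Rightarrow> bool" where
 "adj a b c d \<longleftrightarrow> \<not> (a = c \<and> b = d) \<and> (a = c \<or> a = d \<or> b = c \<or> b = d)"

lemma labQ: "lab k m a b = LQ \<longleftrightarrow> (b \<le> k \<or> b = 2)" unfolding lab_def by auto
lemma labP: "lab k m a b = LP x \<longleftrightarrow> \<not>(b \<le> k \<or> b = 2) \<and> (a \<le> k \<or> (a = Suc k \<and> b \<le> m)) \<and> x = b" unfolding lab_def by auto
lemma labS: "lab k m a b = LS c d \<longleftrightarrow> \<not>(b \<le> k \<or> b = 2) \<and> \<not>(a \<le> k \<or> (a = Suc k \<and> b \<le> m)) \<and> c = a \<and> d = b" unfolding lab_def by auto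

lemma QP:
  fixes k m n a1 b1 c1 a2 b2 c2 x :: nat
  assumes "1 \<le> k" "k+1 \<le> m"
   "1 \<le> a1" "a1 < b1" "1 \<le> a2" "a2 < b2" 
   "1 \<le> c1" "c1 < x" "1 \<le> c2" "c2 < x" "x \<le> n"
   "b1 \<le> k \<or> b1 = 2" "b2 \<le> k \<or> b2 = 2"
   "\<not>(x \<le> k \<or> x = 2)" "c1 \<le> k \<or> (c1 = Suc k \<and> x \<le> m)" "c2 \<le> k \<or> (c2 = Suc k \<and> x \<le> m)"
   "adj a1 b1 c1 x" "\<not> adj a2 b2 c2 x"
  shows "4 \<le> x"
  using assms unfolding adj_def by (elim disjE; simp; linarith?; presburger?)


lemma c3:
  fixes k m n a1 b1 a2 b2 c d :: nat
  assumes "1 \<le> k" "1 \<le> a1" "a1 < b1" "1 \<le> a2" "a2 < b2" "c < d"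
   "b1 \<le> k \<or> b1 = 2" "b2 \<le> k \<or> b2 = 2"
   "\<not>(d \<le> k \<or> d = 2)" "\<not>(c \<le> k \<or> (c = Suc k \<and> d \<le> m))"
   "adj a1 b1 c d" "\<not> adj a2 b2 c d"
  shows False
  using assms unfolding adj_def by (elim disjE; simp; linarith?; presburger?)

lemma c3':
  fixes k m n a1 b1 a2 b2 c d :: nat
  assumes "1 \<le> k" "1 \<le> a1" "a1 < b1" "1 \<le> a2" "a2 < b2" "c < d"
   "b1 \<le> k \<or> b1 = 2" "b2 \<le> k \<or> b2 = 2"
   "\<not>(d \<le> k \<or> d = 2)" "\<not>(c \<le> k \<or> (c = Suc k \<and> d \<le> m))"
   "adj c d a1 b1" "\<not> adj c d a2 b2"
  shows False
  using assms unfolding adj_def by (elim disjE; simp; linarith?; presburger?)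

lemma c4:
  fixes k m n a1 b1 a2 b2 c1 d1 c2 d2 x :: nat
  assumes "1 \<le> k" "1 \<le> a1" "a1 < x" "1 \<le> a2" "a2 < x" "1 \<le> c1" "c1 < d1" "1 \<le> c2" "c2 < d2"
   "d1 \<le> k \<or> d1 = 2" "d2 \<le> k \<or> d2 = 2"
   "\<not>(x \<le> k \<or> x = 2)" "a1 \<le> k \<or> (a1 = Suc k \<and> x \<le> m)" "a2 \<le> k \<or> (a2 = Suc k \<and> x \<le> m)"
   "adj a1 x c1 d1" "\<not> adj a2 x c2 d2"
  shows "2 \<le> k \<and> 4 \<le> x"
  using assms unfolding adj_def by (elim disjE; simp; linarith?; presburger?)

lemma c6:
  fixes k m n a1 a2 c d x :: nat
  assumes "1 \<le> k" "k+1 \<le> m" "1 \<le> a1" "a1 < x" "1 \<le> a2" "a2 < x" "c < d" "d \<le> n"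
   "\<not>(x \<le> k \<or> x = 2)" "a1 \<le> k \<or> (a1 = Suc k \<and> x \<le> m)" "a2 \<le> k \<or> (a2 = Suc k \<and> x \<le> m)"
   "\<not>(d \<le> k \<or> d = 2)" "\<not>(c \<le> k \<or> (c = Suc k \<and> d \<le> m))"
   "adj a1 x c d" "\<not> adj a2 x c d"
  shows "k+2 \<le> x \<and> x \<le> m \<and> c = k+1 \<and> m+1 \<le> d"
  using assms unfolding adj_def by (elim disjE; simp; linarith?; presburger?)

lemma c8:
  fixes k m n c1 c2 a b x :: nat
  assumes "1 \<le> k" "k+1 \<le> m" "1 \<le> c1" "c1 < x" "1 \<le> c2" "c2 < x" "a < b" "b \<le> n"
   "\<not>(x \<le> k \<or> x = 2)" "c1 \<le> k \<or> (c1 = Suc k \<and> x \<le> m)" "c2 \<le> k \<or> (c2 = Suc k \<and> x \<le> m)"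
   "\<not>(b \<le> k \<or> b = 2)" "\<not>(a \<le> k \<or> (a = Suc k \<and> b \<le> m))"
   "adj a b c1 x" "\<not> adj a b c2 x"
  shows "m < n \<and> k+2 \<le> x \<and> x \<le> m"
  using assms unfolding adj_def by (elim disjE; simp; linarith?; presburger?)


lemma key:
  fixes k m n a1 b1 c1 d1 a2 b2 c2 d2 :: nat
  assumes A: "1 \<le> k" "k+1 \<le> m"
   "1 \<le> a1" "a1 < b1" "b1 \<le> n" "1 \<le> a2" "a2 < b2" "b2 \<le> n"
   "1 \<le> c1" "c1 < d1" "d1 \<le> n" "1 \<le> c2" "c2 < d2" "d2 \<le> n"
   and L: "lab k m a1 b1 = l0" "lab k m a2 b2 = l0" "lab k m c1 d1 = l" "lab k m c2 d2 = l" "l \<noteq> l0"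
   and E: "adj a1 b1 c1 d1" "\<not> adj a2 b2 c2 d2"
  shows "l \<in> AL k m n l0"
proof (cases l0)
  case LQ
  then have h: "b1 \<le> k \<or> b1 = 2" "b2 \<le> k \<or> b2 = 2" using L labQ by auto
  show ?thesis
  proof (cases l)
    case LQ with L \<open>l0 = LQ\<close> show ?thesis by simp
  next
    case (LP x)
    then have "d1 = x" "d2 = x" "\<not>(x \<le> k \<or> x = 2)" "c1 \<le> k \<or> (c1 = Suc k \<and> x \<le> m)"
      "c2 \<le> k \<or> (c2 = Suc k \<and> x \<le> m)" using L labP by auto
    then have "4 \<le> x" using QP[of k m a1 b1 a2 b2 c1 x c2 n] A h E by auto
    then show ?thesis using LP \<open>l0 = LQ\<close> \<open>d1 = x\<close> A by auto
  next
    case (LS c d)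
    then have "c1 = c" "d1 = d" "c2 = c" "d2 = d" "\<not>(d \<le> k \<or> d = 2)" "\<not>(c \<le> k \<or> (c = Suc k \<and> d \<le> m))"
      using L labS by auto
    then show ?thesis using c3[of k a1 b1 a2 b2 c d m] A h E by auto
  qed
next
  case (LP x)
  note o = this
  then have h: "b1 = x" "b2 = x" "\<not>(x \<le> k \<or> x = 2)" "a1 \<le> k \<or> (a1 = Suc k \<and> x \<le> m)"
      "a2 \<le> k \<or> (a2 = Suc k \<and> x \<le> m)" using L labP by auto
  show ?thesis
  proof (cases l)
    case LQ
    then have "d1 \<le> k \<or> d1 = 2" "d2 \<le> k \<or> d2 = 2" using L labQ by auto
    then have "2 \<le> k \<and> 4 \<le> x" using c4[of k a1 x a2 c1 d1 c2 d2 m] A h E by auto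
    then show ?thesis using o LQ by simp
  next
    case (LP y)
    then have "d1 = y" "\<not>(y \<le> k \<or> y = 2)" using L labP by auto
    then show ?thesis using o LP L A by auto
  next
    case (LS c d)
    then have "c1 = c" "d1 = d" "c2 = c" "d2 = d" "\<not>(d \<le> k \<or> d = 2)" "\<not>(c \<le> k \<or> (c = Suc k \<and> d \<le> m))"
      using L labS by auto
    then have "k+2 \<le> x \<and> x \<le> m \<and> c = k+1 \<and> m+1 \<le> d"
      using c6[of k m a1 x a2 c d n] A h E by auto
    then show ?thesis using o LS \<open>d1 = d\<close> A by auto
  qed
next
  case (LS a b)
  note o = this
  then have h: "a1 = a" "b1 = b" "a2 = a" "b2 = b" "\<not>(b \<le> k \<or> b = 2)" "\<not>(a \<le> k \<or> (a = Suc k \<and> b \<le> m))"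
      using L labS by auto
  show ?thesis
  proof (cases l)
    case LQ
    then have "d1 \<le> k \<or> d1 = 2" "d2 \<le> k \<or> d2 = 2" using L labQ by auto
    then show ?thesis using c3'[of k c1 d1 c2 d2 a b m] A h E by auto
  next
    case (LP x)
    then have "d1 = x" "d2 = x" "\<not>(x \<le> k \<or> x = 2)" "c1 \<le> k \<or> (c1 = Suc k \<and> x \<le> m)"
      "c2 \<le> k \<or> (c2 = Suc k \<and> x \<le> m)" using L labP by auto
    then have "m < n \<and> k+2 \<le> x \<and> x \<le> m" using c8[of k m c1 x c2 a b n] A h E by auto
    then show ?thesis using LP o by auto
  next
    case (LS c d)
    then have "c1 = c" "d1 = d" "c2 = c" "d2 = d" using L labS by auto
    then show ?thesis using h E by auto
  qed
qed



definition cls :: "('a \<Rightarrow> 'b) \<Rightarrow> 'a set \<Rightarrow> 'b \<Rightarrow> 'a set" where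
  "cls f V l = {v\<in>V. f v = l}"
definition classes :: "('a \<Rightarrow> 'b) \<Rightarrow> 'a set \<Rightarrow> 'a set set" where
  "classes f V = cls f V ` f ` V"

lemma classes_part: "finite V \<Longrightarrow> is_part (classes f V)"
  unfolding is_part_def classes_def cls_def by auto

lemma cls_eq_iff:
  assumes "l \<in> f ` V" shows "cls f V l = cls f V l' \<longleftrightarrow> l = l'"
  using assms unfolding cls_def by blast

lemma classes_merge:
  assumes l1: "l1 \<in> f ` V" and l2: "l2 \<in> f ` V" and ne: "l1 \<noteq> l2"
    and g: "\<forall>v\<in>V. g v = (if f v = l1 then l2 else f v)"
  shows "merge_step (classes f V) (classes g V)"
proof -
  let ?A = "cls f V l1" and ?B = "cls f V l2"
  have m: "?A \<in> classes f V" "?B \<in> classes f V" using l1 l2 unfolding classes_def by auto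
  have n: "?A \<noteq> ?B" using cls_eq_iff[OF l1] ne by simp
  have gi: "\<And>w. w \<in> V \<Longrightarrow> g w = l2 \<longleftrightarrow> (f w = l1 \<or> f w = l2)" using g ne by auto
  have go: "\<And>w l. w \<in> V \<Longrightarrow> l \<noteq> l1 \<Longrightarrow> l \<noteq> l2 \<Longrightarrow> g w = l \<longleftrightarrow> f w = l" using g ne by auto
  have c2: "cls g V l2 = ?A \<union> ?B" unfolding cls_def using gi by auto
  have co: "\<And>l. l \<noteq> l1 \<Longrightarrow> l \<noteq> l2 \<Longrightarrow> cls g V l = cls f V l" unfolding cls_def using go by auto
  have "classes g V = insert (?A \<union> ?B) (classes f V - {?A, ?B})"
  proof (rule set_eqI, rule iffI)
    fix C assume "C \<in> classes g V"
    then obtain v where v: "v \<in> V" "C = cls g V (g v)" unfolding classes_def by auto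
    show "C \<in> insert (?A \<union> ?B) (classes f V - {?A, ?B})"
    proof (cases "f v = l1 \<or> f v = l2")
      case True
      then have "g v = l2" using g v by auto
      then have "C = ?A \<union> ?B" using v c2 by auto
      then show ?thesis by simp
    next
      case False
      then have "g v = f v" using g v by auto
      then have "C = cls f V (f v)" using v co False by auto
      moreover have "cls f V (f v) \<noteq> ?A" "cls f V (f v) \<noteq> ?B"
        using cls_eq_iff[of "f v" f V] v False by auto
      ultimately show ?thesis using v unfolding classes_def by auto
    qed
  next
    fix C assume C: "C \<in> insert (?A \<union> ?B) (classes f V - {?A, ?B})"
    show "C \<in> classes g V"
    proof (cases "C = ?A \<union> ?B")
      case True
      obtain w where w: "w \<in> V" "f w = l2" using l2 by auto
      then have "g w = l2" using g ne by auto
      then have "cls g V (g w) = ?A \<union> ?B" using c2 by auto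
      then show ?thesis using True w unfolding classes_def by auto
    next
      case False
      then obtain v where v: "v \<in> V" "C = cls f V (f v)" "C \<noteq> ?A" "C \<noteq> ?B"
        using C unfolding classes_def by auto
      then have "f v \<noteq> l1" "f v \<noteq> l2" by auto
      then have "g v = f v" using g v by auto
      then have "C = cls g V (g v)" using v co \<open>f v \<noteq> l1\<close> \<open>f v \<noteq> l2\<close> by auto
      then show ?thesis using v unfolding classes_def by auto
    qed
  qed
  then show ?thesis unfolding merge_step_def using m n by blast
qed

lemma classes_cong: "(\<And>v. v \<in> V \<Longrightarrow> f v = g v) \<Longrightarrow> classes f V = classes g V"
  unfolding classes_def cls_def by (auto simp: image_def)

lemma classes_inj: "inj_on f V \<Longrightarrow> classes f V = singleton_partition V"
  unfolding classes_def cls_def singleton_partition_def inj_on_def by auto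

lemma classes_const: "V \<noteq> {} \<Longrightarrow> (\<And>v. v \<in> V \<Longrightarrow> f v = c) \<Longrightarrow> classes f V = {V}"
  unfolding classes_def cls_def by auto



abbreviation "JV n \<equiv> johnson2_vertices n"

lemma V_iff: "S \<in> JV n \<longleftrightarrow> (\<exists>a b. 1 \<le> a \<and> a < b \<and> b \<le> n \<and> S = {a, b})"
proof
  assume "S \<in> JV n"
  then have s: "S \<subseteq> {1..n}" "card S = 2" unfolding johnson2_vertices_def by auto
  then obtain x y where xy: "S = {x, y}" "x \<noteq> y" by (auto simp: card_2_iff)
  show "\<exists>a b. 1 \<le> a \<and> a < b \<and> b \<le> n \<and> S = {a, b}"
  proof (cases "x < y")
    case True then show ?thesis using xy s by (intro exI[of _ x] exI[of _ y]) auto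
  next
    case False then show ?thesis using xy s by (intro exI[of _ y] exI[of _ x]) auto
  qed
next
  assume "\<exists>a b. 1 \<le> a \<and> a < b \<and> b \<le> n \<and> S = {a, b}"
  then show "S \<in> JV n" unfolding johnson2_vertices_def by auto
qed

lemma minmax: "(a::nat) < b \<Longrightarrow> Min {a, b} = a \<and> Max {a, b} = b"
  by auto

lemma adj_iff: "(a::nat) < b \<Longrightarrow> c < d \<Longrightarrow> johnson2_adj {a, b} {c, d} \<longleftrightarrow> adj a b c d"
  unfolding johnson2_adj_def adj_def
  by (cases "a = c"; cases "a = d"; cases "b = c"; cases "b = d") (auto simp: Int_insert_left Int_insert_right)

lemma finV: "finite (JV n)"
proof -
  have "JV n \<subseteq> Pow {1..n}" unfolding johnson2_vertices_def by auto
  then show ?thesis by (rule finite_subset) auto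
qed

definition labS :: "nat \<Rightarrow> nat \<Rightarrow> nat set \<Rightarrow> lbl" where
  "labS k m S = lab k m (Min S) (Max S)"

definition LL :: "nat \<Rightarrow> nat \<Rightarrow> nat \<Rightarrow> nat set set set" where
  "LL n k m = classes (labS k m) (JV n)"

lemma labS_ab: "a < b \<Longrightarrow> labS k m {a, b} = lab k m a b"
  unfolding labS_def using minmax by simp

lemma AL_fin: "finite (AL k m n l)"
  by (cases l) auto

lemma AL_card:
  assumes "1 \<le> k" "k+1 \<le> m" "3 \<le> n" "1 \<le> a" "a < b" "b \<le> n"
  shows "card (AL k m n (lab k m a b)) \<le> 2 * (n - 3)"
proof (cases "lab k m a b")
  case LQ
  have "card (LP ` {4..n}) \<le> card {4..n}" by (rule card_image_le) auto
  then show ?thesis using LQ by simp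
next
  case (LP x)
  then have x: "x = b" "\<not> (b \<le> k \<or> b = 2)" using labP by auto
  let ?A = "(if 2 \<le> k \<and> 4 \<le> x then {LQ} else {})"
  let ?B = "LP ` ({max (k+1) 3..n} - {x})"
  let ?C = "(if k+2 \<le> x \<and> x \<le> m then LS (k+1) ` {m+1..n} else {})"
  have "card (?A \<union> ?B \<union> ?C) \<le> card ?A + card ?B + card ?C"
    by (meson add_mono card_Un_le le_trans order_refl)
  moreover have "card ?A \<le> (if 2 \<le> k \<and> 4 \<le> x then 1 else 0)" by auto
  moreover have "card ?B \<le> n - max (k+1) 3"
  proof -
    have "card ?B \<le> card ({max (k+1) 3..n} - {x})" by (rule card_image_le) auto
    also have "\<dots> = card {max (k+1) 3..n} - 1"
      using x assms by (intro card_Diff_singleton) auto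
    also have "\<dots> = n - max (k+1) 3" by simp
    finally show ?thesis .
  qed
  moreover have "card ?C \<le> (if k+2 \<le> x \<and> x \<le> m then n - m else 0)"
  proof (cases "k+2 \<le> x \<and> x \<le> m")
    case True
    have "card (LS (k+1) ` {m+1..n}) \<le> card {m+1..n}" by (rule card_image_le) auto
    then show ?thesis using True by simp
  next
    case False
    show ?thesis by (simp only: if_not_P[OF False]) simp
  qed
  ultimately have "card (AL k m n (LP x)) \<le> (if 2 \<le> k \<and> 4 \<le> x then 1 else 0) + (n - max (k+1) 3)
      + (if k+2 \<le> x \<and> x \<le> m then n - m else 0)" by simp
  then show ?thesis using LP x assms by (auto split: if_splits)
next
  case (LS c d)
  then have h: "\<not>(b \<le> k \<or> b = 2)" "\<not>(a \<le> k \<or> (a = Suc k \<and> b \<le> m))" using labS by auto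
  have "card (LP ` {k+2..m}) \<le> card {k+2..m}" by (rule card_image_le) auto
  then show ?thesis using LS assms by auto
qed

lemma red_bound:
  assumes k: "1 \<le> k" "k+1 \<le> m" "3 \<le> n" and U: "U \<in> LL n k m"
  shows "red_degree johnson2_adj (LL n k m) U \<le> 2 * (n - 3)"
proof -
  let ?f = "labS k m" and ?V = "JV n"
  obtain S0 where S0: "S0 \<in> ?V" "U = cls ?f ?V (?f S0)" using U unfolding LL_def classes_def by auto
  obtain a0 b0 where ab0: "1 \<le> a0" "a0 < b0" "b0 \<le> n" "S0 = {a0, b0}" using S0 V_iff by blast
  define l0 where "l0 = lab k m a0 b0"
  have fl0: "?f S0 = l0" unfolding l0_def using ab0 labS_ab by simp
  have sub: "{W \<in> LL n k m. W \<noteq> U \<and> red_edge johnson2_adj U W} \<subseteq> cls ?f ?V ` AL k m n l0"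
  proof
    fix W assume W: "W \<in> {W \<in> LL n k m. W \<noteq> U \<and> red_edge johnson2_adj U W}"
    then obtain T where T: "T \<in> ?V" "W = cls ?f ?V (?f T)" unfolding LL_def classes_def by auto
    define l where "l = ?f T"
    have lne: "l \<noteq> l0" using W T S0 fl0 l_def by auto
    from W have re: "red_edge johnson2_adj U W" by auto
    then obtain u1 w1 u2 w2 where uw: "u1 \<in> U" "w1 \<in> W" "johnson2_adj u1 w1"
        "u2 \<in> U" "w2 \<in> W" "\<not> johnson2_adj u2 w2"
      unfolding red_edge_def by blast
    have uU: "\<And>u. u \<in> U \<Longrightarrow> u \<in> ?V \<and> ?f u = l0" using S0 fl0 unfolding cls_def by auto
    have wW: "\<And>w. w \<in> W \<Longrightarrow> w \<in> ?V \<and> ?f w = l" using T l_def unfolding cls_def by auto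
    obtain a1 b1 where 1: "1 \<le> a1" "a1 < b1" "b1 \<le> n" "u1 = {a1, b1}" using uU[OF uw(1)] V_iff by blast
    obtain c1 d1 where 2: "1 \<le> c1" "c1 < d1" "d1 \<le> n" "w1 = {c1, d1}" using wW[OF uw(2)] V_iff by blast
    obtain a2 b2 where 3: "1 \<le> a2" "a2 < b2" "b2 \<le> n" "u2 = {a2, b2}" using uU[OF uw(4)] V_iff by blast
    obtain c2 d2 where 4: "1 \<le> c2" "c2 < d2" "d2 \<le> n" "w2 = {c2, d2}" using wW[OF uw(5)] V_iff by blast
    have L: "lab k m a1 b1 = l0" "lab k m a2 b2 = l0" "lab k m c1 d1 = l" "lab k m c2 d2 = l"
      using uU[OF uw(1)] uU[OF uw(4)] wW[OF uw(2)] wW[OF uw(5)] 1 2 3 4 labS_ab by auto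
    have E: "adj a1 b1 c1 d1" "\<not> adj a2 b2 c2 d2"
      using uw(3) uw(6) 1 2 3 4 adj_iff by auto
    have "l \<in> AL k m n l0" by (rule key[OF k(1,2) 1(1-3) 3(1-3) 2(1-3) 4(1-3) L lne E])
    then show "W \<in> cls ?f ?V ` AL k m n l0" using T l_def by auto
  qed
  have "red_degree johnson2_adj (LL n k m) U \<le> card (cls ?f ?V ` AL k m n l0)"
    unfolding red_degree_def by (rule card_mono) (use sub AL_fin in auto)
  also have "\<dots> \<le> card (AL k m n l0)" by (rule card_image_le[OF AL_fin])
  also have "\<dots> \<le> 2 * (n - 3)" unfolding l0_def by (rule AL_card[OF k ab0(1-3)])
  finally show ?thesis .
qed

lemma ok_LL: "1 \<le> k \<Longrightarrow> k+1 \<le> m \<Longrightarrow> 3 \<le> n \<Longrightarrow> okp johnson2_adj (2 * (n - 3)) (LL n k m)"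
  unfolding okp_def using red_bound classes_part[OF finV] LL_def by metis



lemma tww_le:
  assumes fV: "finite V" and ne: "V \<noteq> {}" and ok0: "okp E d (singleton_partition V)"
    and r: "(stp E d)\<^sup>*\<^sup>* (singleton_partition V) {V}"
  shows "twin_width V E \<le> d"
proof -
  obtain F where F: "F (card V) = singleton_partition V"
     "\<forall>i. card {V} \<le> i \<and> i < card V \<longrightarrow> merge_step (F (Suc i)) (F i)"
     "\<forall>i. card {V} \<le> i \<and> i \<le> card V \<longrightarrow> okp E d (F i)"
    using chain_aux[OF fV ok0 r] by blast
  have cs: "contraction_sequence V F" unfolding contraction_sequence_def using F(1,2) by auto
  have sw: "seq_width_le E V F d" unfolding seq_width_le_def okp_def using F(3) unfolding okp_def by auto
  show ?thesis unfolding twin_width_def by (rule Least_le) (use cs sw in blast)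
qed

lemma lab12_inj: "1 \<le> (a::nat) \<Longrightarrow> a < b \<Longrightarrow> 1 \<le> c \<Longrightarrow> c < d \<Longrightarrow> lab 1 2 a b = lab 1 2 c d \<Longrightarrow> a = c \<and> b = d"
  unfolding lab_def by (auto split: if_splits)

lemma L12: "LL n 1 2 = singleton_partition (JV n)"
  unfolding LL_def
proof (rule classes_inj, rule inj_onI)
  fix S T assume S: "S \<in> JV n" and T: "T \<in> JV n" and eq: "labS 1 2 S = labS 1 2 T"
  obtain a b where ab: "1 \<le> a" "a < b" "S = {a, b}" using S V_iff by blast
  obtain c d where cd: "1 \<le> c" "c < d" "T = {c, d}" using T V_iff by blast
  have "lab 1 2 a b = lab 1 2 c d" using eq ab cd labS_ab by simp
  then show "S = T" using lab12_inj ab cd by auto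
qed

lemma mem_V: "1 \<le> a \<Longrightarrow> a < b \<Longrightarrow> b \<le> n \<Longrightarrow> {a, b} \<in> JV n"
  using V_iff by blast

lemma step_in:
  assumes "1 \<le> k" "k+1 \<le> m" "m < n" "3 \<le> n"
  shows "stp johnson2_adj (2 * (n - 3)) (LL n k m) (LL n k (Suc m))"
  unfolding stp_def
proof
  have l1: "LS (k+1) (m+1) \<in> labS k m ` JV n"
  proof
    show "{k+1, m+1} \<in> JV n" using assms by (intro mem_V) auto
    show "LS (k+1) (m+1) = labS k m {k+1, m+1}" using assms labS_ab[of "k+1" "m+1"] by (simp add: lab_def)
  qed
  have l2: "LP (m+1) \<in> labS k m ` JV n"
  proof
    show "{1, m+1} \<in> JV n" using assms by (intro mem_V) auto
    show "LP (m+1) = labS k m {1, m+1}" using assms labS_ab[of "1" "m+1"] by (simp add: lab_def)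
  qed
  have g: "\<forall>v\<in>JV n. labS k (Suc m) v = (if labS k m v = LS (k+1) (m+1) then LP (m+1) else labS k m v)"
  proof
    fix v assume "v \<in> JV n"
    then obtain a b where ab: "1 \<le> a" "a < b" "v = {a, b}" using V_iff by blast
    show "labS k (Suc m) v = (if labS k m v = LS (k+1) (m+1) then LP (m+1) else labS k m v)"
      using ab labS_ab by (auto simp: lab_def)
  qed
  show "merge_step (LL n k m) (LL n k (Suc m))"
    unfolding LL_def by (rule classes_merge[OF l1 l2 _ g]) simp
  show "okp johnson2_adj (2 * (n - 3)) (LL n k (Suc m))" using ok_LL assms by simp
qed

lemma step_ph:
  assumes "2 \<le> k" "k+1 \<le> n" "3 \<le> n"
  shows "stp johnson2_adj (2 * (n - 3)) (LL n k n) (LL n (Suc k) (Suc (Suc k)))"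
  unfolding stp_def
proof
  have l1: "LP (k+1) \<in> labS k n ` JV n"
  proof
    show "{1, k+1} \<in> JV n" using assms by (intro mem_V) auto
    show "LP (k+1) = labS k n {1, k+1}" using assms labS_ab[of "1" "k+1"] by (simp add: lab_def)
  qed
  have l2: "LQ \<in> labS k n ` JV n"
  proof
    show "{1, 2} \<in> JV n" using assms by (intro mem_V) auto
    show "LQ = labS k n {1, 2}" using assms labS_ab[of "1" "2"] by (simp add: lab_def)
  qed
  have g: "\<forall>v\<in>JV n. labS (Suc k) (Suc (Suc k)) v = (if labS k n v = LP (k+1) then LQ else labS k n v)"
  proof
    fix v assume "v \<in> JV n"
    then obtain a b where ab: "1 \<le> a" "a < b" "b \<le> n" "v = {a, b}" using V_iff by blast
    show "labS (Suc k) (Suc (Suc k)) v = (if labS k n v = LP (k+1) then LQ else labS k n v)"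
      using ab labS_ab assms by (auto simp: lab_def)
  qed
  show "merge_step (LL n k n) (LL n (Suc k) (Suc (Suc k)))"
    unfolding LL_def by (rule classes_merge[OF l1 l2 _ g]) simp
  show "okp johnson2_adj (2 * (n - 3)) (LL n (Suc k) (Suc (Suc k)))" using ok_LL assms by simp
qed

lemma L1n: "3 \<le> n \<Longrightarrow> LL n 1 n = LL n 2 3"
  unfolding LL_def
proof (rule classes_cong)
  fix v assume "3 \<le> n" "v \<in> JV n"
  then obtain a b where ab: "1 \<le> a" "a < b" "b \<le> n" "v = {a, b}" using V_iff by blast
  then show "labS 1 n v = labS 2 3 v" using labS_ab by (auto simp: lab_def)
qed

lemma Lnn: "3 \<le> n \<Longrightarrow> LL n n (Suc n) = {JV n}"
  unfolding LL_def
proof (rule classes_const)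
  assume "3 \<le> n"
  then show "JV n \<noteq> {}" using mem_V[of 1 2 n] by auto
next
  fix v assume "3 \<le> n" "v \<in> JV n"
  then obtain a b where ab: "1 \<le> a" "a < b" "b \<le> n" "v = {a, b}" using V_iff by blast
  then show "labS n (Suc n) v = LQ" using labS_ab by (auto simp: lab_def)
qed

lemma chainA:
  assumes "1 \<le> k" "k+1 \<le> m" "m \<le> n" "3 \<le> n"
  shows "(stp johnson2_adj (2 * (n - 3)))\<^sup>*\<^sup>* (LL n k m) (LL n k n)"
  using assms(3)
proof (induction m rule: inc_induct)
  case base then show ?case by simp
next
  case (step j)
  have "stp johnson2_adj (2 * (n - 3)) (LL n k j) (LL n k (Suc j))"
    using step_in[of k j n] assms step.hyps by simp
  then show ?case using step.IH by (rule converse_rtranclp_into_rtranclp)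
qed

lemma chainC:
  assumes "2 \<le> k" "k \<le> n" "3 \<le> n"
  shows "(stp johnson2_adj (2 * (n - 3)))\<^sup>*\<^sup>* (LL n 1 2) (LL n k (Suc k))"
  using assms(1,2)
proof (induction k rule: dec_induct)
  case base
  have "(stp johnson2_adj (2 * (n - 3)))\<^sup>*\<^sup>* (LL n 1 2) (LL n 1 n)"
    using chainA[of 1 2 n] assms by simp
  then show ?case using L1n assms by (simp add: numeral_3_eq_3)
next
  case (step j)
  have "(stp johnson2_adj (2 * (n - 3)))\<^sup>*\<^sup>* (LL n j (Suc j)) (LL n j n)"
    using chainA[of j "Suc j" n] assms step.hyps by simp
  moreover have "stp johnson2_adj (2 * (n - 3)) (LL n j n) (LL n (Suc j) (Suc (Suc j)))"
    using step_ph[of j n] assms step.hyps by simp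
  moreover have "(stp johnson2_adj (2 * (n - 3)))\<^sup>*\<^sup>* (LL n 1 2) (LL n j (Suc j))"
    using step.IH step.hyps assms by simp
  ultimately show ?case by (meson rtranclp.rtrancl_into_rtrancl rtranclp_trans)
qed

theorem mainTheorem18:
  fixes n :: nat
  assumes "n \<ge> 3"
  shows "twin_width (johnson2_vertices n) johnson2_adj \<le> 2 * (n - 3)"
proof (rule tww_le)
  show "finite (JV n)" by (rule finV)
  show "JV n \<noteq> {}" using mem_V[of 1 2 n] assms by auto
  show "okp johnson2_adj (2 * (n - 3)) (singleton_partition (JV n))"
    using ok_LL[of 1 2 n] assms L12 by simp
  show "(stp johnson2_adj (2 * (n - 3)))\<^sup>*\<^sup>* (singleton_partition (JV n)) {JV n}"
    using chainC[of n n] assms L12 Lnn by simp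
qed


end
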